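(* Let $M,N\ge1$, $\gamma>0$, $\lambda_x,\lambda_v,\lambda_w>0$, and let $\{(\hat x_i,\hat v_i)\}_{i=1}^N$ solve the centralized herding system \[ \frac{d\hat x_i}{dt}=\hat v_i,\qquad \frac{d\hat v_i}{dt}=\frac{\lambda_x}{N}\sum_{j=1}^N\hat\phi_{ij}(\hat x_j-\hat x_i)+\frac{\lambda_v}{N}\sum_{j=1}^N\hat\phi_{ij}(\hat v_j-\hat v_i)-\lambda_w\hat x_i,\qquad \hat\phi_{ij}=(1+|\hat x_i-\hat x_j|^2)^{-\gamma/2}. \] Fix $t>0$ and assume $\sum_{i,j}|\hat v_i(t)-\hat v_j(t)|=0$ while $\sum_{i,j}|\hat x_i(t)-\hat x_j(t)|\ne0$. Then $\mathcal{E}_2'(t)=\mathcal{E}_2''(t)=0$ and $\mathcal{E}_2'''(t)<0$.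
   Context: $|\cdot|$ is the Euclidean norm on $\mathbb{R}^M$. $X=\sum_i|\hat x_i|^2$, $V=\sum_i|\hat v_i|^2$, \[ S_\gamma=\begin{cases}\frac1N\sum_{i,j}\big\{(1+|\hat x_i-\hat x_j|^2)^{-(\gamma-2)/2}-1\big\}, & 0<\gamma<2,\\ \frac1N\sum_{i,j}\log(1+|\hat x_i-\hat x_j|^2), & \gamma=2,\\ \frac1N\sum_{i,j}\big\{1-(1+|\hat x_i-\hat x_j|^2)^{-(\gamma-2)/2}\big\}, & \gamma>2,\end{cases} \qquad \beta_\gamma=\begin{cases}2-\gamma,&0<\gamma<2,\\2,&\gamma=2,\\\gamma-2,&\gamma>2,\end{cases} \] and $\mathcal{E}_2=\lambda_wX+V+\lambda_x\beta_\gamma^{-1}S_\gamma$; primes denote time derivatives along the solution. *)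

theory Defs
  imports "HOL-Analysis.Analysis"
begin

text \<open>Agents are indexed by i < N; positions/velocities live in real^'m (Euclidean R^M,
 M = CARD('m) \<ge> 1). Trajectories are functions of time.\<close>

definition herd_phi :: "real \<Rightarrow> real^('m::finite) \<Rightarrow> real^'m \<Rightarrow> real" where
  "herd_phi \<gamma> a b = (1 + (norm (a - b))\<^sup>2) powr (-\<gamma>/2)"

definition herd_S :: "real \<Rightarrow> nat \<Rightarrow> (nat \<Rightarrow> real^'m::finite) \<Rightarrow> real" where
  "herd_S \<gamma> N x =
    (if \<gamma> < 2 then (1/N) * (\<Sum>i<N. \<Sum>j<N. (1 + (norm (x i - x j))\<^sup>2) powr (-(\<gamma>-2)/2) - 1)
     else if \<gamma> = 2 then (1/N) * (\<Sum>i<N. \<Sum>j<N. ln (1 + (norm (x i - x j))\<^sup>2))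
     else (1/N) * (\<Sum>i<N. \<Sum>j<N. 1 - (1 + (norm (x i - x j))\<^sup>2) powr (-(\<gamma>-2)/2)))"

definition herd_beta :: "real \<Rightarrow> real" where
  "herd_beta \<gamma> = (if \<gamma> < 2 then 2 - \<gamma> else if \<gamma> = 2 then 2 else \<gamma> - 2)"

definition herd_E2 :: "real \<Rightarrow> real \<Rightarrow> real \<Rightarrow> nat \<Rightarrow>
    (nat \<Rightarrow> real \<Rightarrow> real^'m::finite) \<Rightarrow> (nat \<Rightarrow> real \<Rightarrow> real^'m) \<Rightarrow> real \<Rightarrow> real" where
  "herd_E2 \<gamma> lx lw N x v s =
     lw * (\<Sum>i<N. (norm (x i s))\<^sup>2) + (\<Sum>i<N. (norm (v i s))\<^sup>2)
     + lx / herd_beta \<gamma> * herd_S \<gamma> N (\<lambda>i. x i s)"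

end

theory Submission
  imports Defs
begin

lemma vec_quot:
  fixes g :: "real \<Rightarrow> 'a::real_normed_vector"
  assumes "(g has_vector_derivative g') (at t)"
  shows "((\<lambda>y. (g y - g t) /\<^sub>R (y - t)) \<longlongrightarrow> g') (at t)"
proof -
  have 1: "((\<lambda>y. norm (g y - g t - (y - t) *\<^sub>R g') / norm (y - t)) \<longlongrightarrow> 0) (at t)"
    using assms unfolding has_vector_derivative_def has_derivative_iff_norm by auto
  have ev: "\<forall>\<^sub>F y in at t. y \<noteq> t" by (auto simp: eventually_at_filter)
  have "\<forall>\<^sub>F y in at t. norm (g y - g t - (y - t) *\<^sub>R g') / norm (y - t) = norm ((g y - g t) /\<^sub>R (y - t) - g')"
  proof (rule eventually_mono[OF ev])
    fix y assume "y \<noteq> t"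
    then have "(g y - g t) /\<^sub>R (y - t) - g' = (1/(y-t)) *\<^sub>R (g y - g t - (y - t) *\<^sub>R g')"
      unfolding scaleR_diff_right scaleR_scaleR using `y \<noteq> t` by (simp add: divide_inverse)
    then show "norm (g y - g t - (y - t) *\<^sub>R g') / norm (y - t) = norm ((g y - g t) /\<^sub>R (y - t) - g')"
      by (simp add: divide_simps)
  qed
  from Lim_transform_eventually[OF 1 this] show ?thesis
    by (simp add: tendsto_norm_zero_iff LIM_zero_iff)
qed

lemma Lzero:
  fixes f g :: "real \<Rightarrow> 'a::real_inner"
  assumes "g t = 0" "(g has_vector_derivative g') (at t)" "isCont f t"
  shows "((\<lambda>s. inner (f s) (g s)) has_real_derivative inner (f t) g') (at t)"
proof -
  have "((\<lambda>y. inner (f y) ((g y - g t) /\<^sub>R (y - t))) \<longlongrightarrow> inner (f t) g') (at t)"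
    by (intro tendsto_inner vec_quot assms(2) assms(3)[unfolded isCont_def])
  then show ?thesis unfolding has_field_derivative_iff using assms(1)
    by (simp add: divide_inverse mult.commute)
qed
lemma dinner:
  fixes f g :: "real \<Rightarrow> 'a::real_inner"
  assumes "(f has_vector_derivative f') (at s)" "(g has_vector_derivative g') (at s)"
  shows "((\<lambda>s. inner (f s) (g s)) has_real_derivative (inner f' (g s) + inner (f s) g')) (at s)"
proof -
  have e: "(\<lambda>h. h * (f' \<bullet> g s) + h * (f s \<bullet> g')) = (*) (f' \<bullet> g s + f s \<bullet> g')"
    by (auto simp: ring_distribs)
  show ?thesis
  using has_derivative_inner[OF assms[unfolded has_vector_derivative_def]]
  unfolding has_field_derivative_def e[symmetric]
  by (simp add: algebra_simps)
qed

lemma rho_deriv: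
  fixes f :: "real \<Rightarrow> 'a::real_inner"
  assumes "(f has_vector_derivative f') (at s)"
  shows "((\<lambda>s. 1 + (norm (f s))^2) has_real_derivative 2 * inner (f s) f') (at s)"
proof -
  have "((\<lambda>s. inner (f s) (f s)) has_real_derivative inner f' (f s) + inner (f s) f') (at s)"
    by (rule dinner[OF assms assms])
  from DERIV_add[OF DERIV_const[of 1] this] show ?thesis
    by (simp add: power2_norm_eq_inner inner_commute)
qed

lemma rho_pow_deriv:
  fixes f :: "real \<Rightarrow> 'a::real_inner"
  assumes "(f has_vector_derivative f') (at s)"
  shows "((\<lambda>s. (1 + (norm (f s))^2) powr p) has_real_derivative
           p * (1 + (norm (f s))^2) powr (p - 1) * (2 * inner (f s) f')) (at s)"
  using DERIV_fun_powr[OF rho_deriv[OF assms], of p] by (simp add: add_pos_nonneg)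

lemma rho_ln_deriv:
  fixes f :: "real \<Rightarrow> 'a::real_inner"
  assumes "(f has_vector_derivative f') (at s)"
  shows "((\<lambda>s. ln (1 + (norm (f s))^2)) has_real_derivative
           (1 + (norm (f s))^2) powr (-1) * (2 * inner (f s) f')) (at s)"
proof -
  have pos: "0 < 1 + (norm (f s))^2" by (simp add: add_pos_nonneg)
  from DERIV_chain2[OF DERIV_ln_divide[OF pos] rho_deriv[OF assms]] show ?thesis
    using pos by (simp add: powr_minus_divide)
qed

lemma S_deriv:
  fixes y :: "nat \<Rightarrow> real \<Rightarrow> real^'m::finite"
  assumes d: "\<And>i. i < N \<Longrightarrow> (y i has_vector_derivative u i) (at s)" and g: "\<gamma> > 0"
  shows "((\<lambda>s. herd_S \<gamma> N (\<lambda>i. y i s)) has_real_derivative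
     (1/N) * (\<Sum>i<N. \<Sum>j<N. herd_beta \<gamma> * herd_phi \<gamma> (y i s) (y j s) * inner (y i s - y j s) (u i - u j))) (at s)"
proof -
  have dij: "((\<lambda>s. y i s - y j s) has_vector_derivative u i - u j) (at s)" if "i < N" "j < N" for i j
    using that by (intro has_vector_derivative_diff d)
  consider "\<gamma> < 2" | "\<gamma> = 2" | "\<gamma> > 2" by linarith
  then show ?thesis
  proof cases
    case 1
    have e: "-(\<gamma>-2)/2 - 1 = -\<gamma>/2" by (simp add: field_simps)
    have "((\<lambda>s. (1 + (norm (y i s - y j s))\<^sup>2) powr (-(\<gamma>-2)/2) - 1) has_real_derivative
       herd_beta \<gamma> * herd_phi \<gamma> (y i s) (y j s) * inner (y i s - y j s) (u i - u j)) (at s)"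
      if "i < N" "j < N" for i j
      apply (rule DERIV_cong[OF DERIV_diff[OF rho_pow_deriv[OF dij[OF that], of "-(\<gamma>-2)/2"] DERIV_const[of 1], unfolded e]])
      using 1 by (simp add: herd_beta_def herd_phi_def)
    then have "((\<lambda>s. (1/N) * (\<Sum>i<N. \<Sum>j<N. (1 + (norm (y i s - y j s))\<^sup>2) powr (-(\<gamma>-2)/2) - 1)) has_real_derivative
     (1/N) * (\<Sum>i<N. \<Sum>j<N. herd_beta \<gamma> * herd_phi \<gamma> (y i s) (y j s) * inner (y i s - y j s) (u i - u j))) (at s)"
      by (intro DERIV_cmult DERIV_sum) auto
    then show ?thesis using 1 by (simp add: herd_S_def)
  next
    case 2
    have "((\<lambda>s. ln (1 + (norm (y i s - y j s))\<^sup>2)) has_real_derivative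
       herd_beta \<gamma> * herd_phi \<gamma> (y i s) (y j s) * inner (y i s - y j s) (u i - u j)) (at s)"
      if "i < N" "j < N" for i j
      apply (rule DERIV_cong[OF rho_ln_deriv[OF dij[OF that]]])
      using 2 by (simp add: herd_beta_def herd_phi_def)
    then have "((\<lambda>s. (1/N) * (\<Sum>i<N. \<Sum>j<N. ln (1 + (norm (y i s - y j s))\<^sup>2))) has_real_derivative
     (1/N) * (\<Sum>i<N. \<Sum>j<N. herd_beta \<gamma> * herd_phi \<gamma> (y i s) (y j s) * inner (y i s - y j s) (u i - u j))) (at s)"
      by (intro DERIV_cmult DERIV_sum) auto
    then show ?thesis using 2 by (simp add: herd_S_def)
  next
    case 3
    have e: "-(\<gamma>-2)/2 - 1 = -\<gamma>/2" by (simp add: field_simps)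
    have "((\<lambda>s. 1 - (1 + (norm (y i s - y j s))\<^sup>2) powr (-(\<gamma>-2)/2)) has_real_derivative
       herd_beta \<gamma> * herd_phi \<gamma> (y i s) (y j s) * inner (y i s - y j s) (u i - u j)) (at s)"
      if "i < N" "j < N" for i j
      apply (rule DERIV_cong[OF DERIV_diff[OF DERIV_const[of 1] rho_pow_deriv[OF dij[OF that], of "-(\<gamma>-2)/2"], unfolded e]])
      using 3 by (simp add: herd_beta_def herd_phi_def minus_mult_left mult.assoc)
    then have "((\<lambda>s. (1/N) * (\<Sum>i<N. \<Sum>j<N. 1 - (1 + (norm (y i s - y j s))\<^sup>2) powr (-(\<gamma>-2)/2))) has_real_derivative
     (1/N) * (\<Sum>i<N. \<Sum>j<N. herd_beta \<gamma> * herd_phi \<gamma> (y i s) (y j s) * inner (y i s - y j s) (u i - u j))) (at s)"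
      by (intro DERIV_cmult DERIV_sum) auto
    then show ?thesis using 3 by (simp add: herd_S_def)
  qed
qed

lemma rho_ne [simp]: "1 + (norm z)^2 \<noteq> (0::real)"
  by (smt (verit) zero_le_power2)

lemma nsq_deriv:
  fixes f :: "real \<Rightarrow> 'a::real_inner"
  assumes "(f has_vector_derivative f') (at s)"
  shows "((\<lambda>s. (norm (f s))^2) has_real_derivative 2 * inner (f s) f') (at s)"
  using dinner[OF assms assms] by (simp add: power2_norm_eq_inner inner_commute)

lemma sym_sum:
  fixes p q :: "nat \<Rightarrow> 'a::real_inner" and K :: "nat \<Rightarrow> nat \<Rightarrow> real"
  assumes "\<And>i j. K i j = K j i"
  shows "(\<Sum>i<N. \<Sum>j<N. K i j * inner (p i) (q j - q i)) = -(1/2) * (\<Sum>i<N. \<Sum>j<N. K i j * inner (p i - p j) (q i - q j))"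
proof -
  let ?L = "(\<Sum>i<N. \<Sum>j<N. K i j * inner (p i) (q j - q i))"
  have sw: "?L = (\<Sum>i<N. \<Sum>j<N. K j i * inner (p j) (q i - q j))"
    by (subst sum.swap) simp
  have "2 * ?L = ?L + (\<Sum>i<N. \<Sum>j<N. K j i * inner (p j) (q i - q j))"
    using sw by simp
  also have "\<dots> = (\<Sum>i<N. \<Sum>j<N. K i j * inner (p i) (q j - q i) + K j i * inner (p j) (q i - q j))"
    by (simp add: sum.distrib)
  also have "\<dots> = (\<Sum>i<N. \<Sum>j<N. - (K i j * inner (p i - p j) (q i - q j)))"
    by (intro sum.cong refl) (simp add: assms[of _ i for i] algebra_simps)
  finally show ?thesis by (simp add: sum_negf)
qed

theorem lemma5p3:
  fixes x v :: "nat \<Rightarrow> real \<Rightarrow> real^'m::finite"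
    and N :: nat and \<gamma> lx lv lw t :: real and I :: "real set"
  assumes "N \<ge> 1" and "\<gamma> > 0" and "lx > 0" and "lv > 0" and "lw > 0"
    and "open I" and "t \<in> I" and "t > 0"
    and xd: "\<And>i s. i < N \<Longrightarrow> s \<in> I \<Longrightarrow> (x i has_vector_derivative v i s) (at s)"
    and vd: "\<And>i s. i < N \<Longrightarrow> s \<in> I \<Longrightarrow> (v i has_vector_derivative
          ((lx / N) *\<^sub>R (\<Sum>j<N. herd_phi \<gamma> (x i s) (x j s) *\<^sub>R (x j s - x i s))
         + (lv / N) *\<^sub>R (\<Sum>j<N. herd_phi \<gamma> (x i s) (x j s) *\<^sub>R (v j s - v i s))
         - lw *\<^sub>R x i s)) (at s)"
    and "(\<Sum>i<N. \<Sum>j<N. norm (v i t - v j t)) = 0"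
    and "(\<Sum>i<N. \<Sum>j<N. norm (x i t - x j t)) \<noteq> 0"
  shows "deriv (herd_E2 \<gamma> lx lw N x v) t = 0
       \<and> (deriv ^^ 2) (herd_E2 \<gamma> lx lw N x v) t = 0
       \<and> (deriv ^^ 3) (herd_E2 \<gamma> lx lw N x v) t < 0"
proof -
  define E where "E = herd_E2 \<gamma> lx lw N x v"
  define ph where "ph i j s = herd_phi \<gamma> (x i s) (x j s)" for i j s
  define a where "a i s = (lx / N) *\<^sub>R (\<Sum>j<N. ph i j s *\<^sub>R (x j s - x i s))
         + (lv / N) *\<^sub>R (\<Sum>j<N. ph i j s *\<^sub>R (v j s - v i s))
         - lw *\<^sub>R x i s" for i s
  define w where "w i j s = v i s - v j s" for i j s
  define F1 where "F1 s = -(lv/N) * (\<Sum>i<N. \<Sum>j<N. ph i j s * inner (w i j s) (w i j s))" for s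
  have vd': "(v i has_vector_derivative a i s) (at s)" if "i < N" "s \<in> I" for i s
    using vd[OF that] unfolding a_def ph_def .
  have phsym: "ph i j s = ph j i s" for i j s
    unfolding ph_def herd_phi_def by (simp add: norm_minus_commute)
  have beta: "herd_beta \<gamma> \<noteq> 0" unfolding herd_beta_def by auto
  have Nne: "real N \<noteq> 0" using assms(1) by simp
  have dE: "(E has_real_derivative F1 s) (at s)" if sI: "s \<in> I" for s
  proof -
    have dX: "((\<lambda>s. \<Sum>i<N. (norm (x i s))^2) has_real_derivative (\<Sum>i<N. 2 * inner (x i s) (v i s))) (at s)"
      by (intro DERIV_sum nsq_deriv xd sI) auto
    have dV: "((\<lambda>s. \<Sum>i<N. (norm (v i s))^2) has_real_derivative (\<Sum>i<N. 2 * inner (v i s) (a i s))) (at s)"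
      by (intro DERIV_sum nsq_deriv vd' sI) auto
    have dS: "((\<lambda>s. herd_S \<gamma> N (\<lambda>i. x i s)) has_real_derivative
       (1/N) * (\<Sum>i<N. \<Sum>j<N. herd_beta \<gamma> * ph i j s * inner (x i s - x j s) (v i s - v j s))) (at s)"
      using S_deriv[of N x "\<lambda>i. v i s" s \<gamma>] xd sI assms(2) unfolding ph_def by auto
    have D: "(E has_real_derivative lw * (\<Sum>i<N. 2 * inner (x i s) (v i s)) + (\<Sum>i<N. 2 * inner (v i s) (a i s))
       + lx / herd_beta \<gamma> * ((1/N) * (\<Sum>i<N. \<Sum>j<N. herd_beta \<gamma> * ph i j s * inner (x i s - x j s) (v i s - v j s)))) (at s)"
      unfolding E_def herd_E2_def[abs_def]
      by (intro DERIV_add DERIV_cmult dX dV dS)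
    define C where "C = (\<Sum>i<N. \<Sum>j<N. ph i j s * inner (x i s - x j s) (v i s - v j s))"
    define B where "B = (\<Sum>i<N. \<Sum>j<N. ph i j s * inner (w i j s) (w i j s))"
    have va: "inner (v i s) (a i s) = (lx/N) * (\<Sum>j<N. ph i j s * inner (v i s) (x j s - x i s))
        + (lv/N) * (\<Sum>j<N. ph i j s * inner (v i s) (v j s - v i s)) - lw * inner (v i s) (x i s)" for i
      unfolding a_def by (simp add: inner_add_right inner_diff_right inner_sum_right)
    have sA: "(\<Sum>i<N. \<Sum>j<N. ph i j s * inner (v i s) (x j s - x i s)) = -(1/2) * C"
      unfolding C_def using sym_sum[where K="\<lambda>i j. ph i j s" and N=N and p="\<lambda>i. v i s" and q="\<lambda>i. x i s"] phsym
      by (simp add: inner_commute)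
    have sB: "(\<Sum>i<N. \<Sum>j<N. ph i j s * inner (v i s) (v j s - v i s)) = -(1/2) * B"
      unfolding B_def w_def using sym_sum[where K="\<lambda>i j. ph i j s" and N=N and p="\<lambda>i. v i s" and q="\<lambda>i. v i s"] phsym
      by simp
    have s1: "(\<Sum>i<N. inner (v i s) (a i s)) = (lx/N) * (\<Sum>i<N. \<Sum>j<N. ph i j s * inner (v i s) (x j s - x i s))
        + (lv/N) * (\<Sum>i<N. \<Sum>j<N. ph i j s * inner (v i s) (v j s - v i s)) - lw * (\<Sum>i<N. inner (v i s) (x i s))"
      unfolding va by (simp add: sum.distrib sum_subtractf sum_distrib_left)
    have sV: "(\<Sum>i<N. 2 * inner (v i s) (a i s)) = (lx/N) * (-C) + (lv/N) * (-B) - lw * (\<Sum>i<N. 2 * inner (x i s) (v i s))"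
    proof -
      have "(\<Sum>i<N. 2 * inner (v i s) (a i s)) = 2 * (\<Sum>i<N. inner (v i s) (a i s))"
        by (simp add: sum_distrib_left)
      also have "\<dots> = (lx/N) * (-C) + (lv/N) * (-B) - lw * (2 * (\<Sum>i<N. inner (x i s) (v i s)))"
        unfolding s1 sA sB by (simp add: inner_commute algebra_simps)
      also have "\<dots> = (lx/N) * (-C) + (lv/N) * (-B) - lw * (\<Sum>i<N. 2 * inner (x i s) (v i s))"
        by (simp add: sum_distrib_left)
      finally show ?thesis .
    qed
    have sS: "lx / herd_beta \<gamma> * ((1/N) * (\<Sum>i<N. \<Sum>j<N. herd_beta \<gamma> * ph i j s * inner (x i s - x j s) (v i s - v j s))) = (lx/N) * C"
      unfolding C_def using beta by (simp add: sum_distrib_left[symmetric] mult.assoc)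
    show ?thesis using D unfolding sV sS F1_def B_def by (simp add: algebra_simps)
  qed
  define dph where "dph i j s = (-\<gamma>/2) * (1 + (norm (x i s - x j s))^2) powr (-\<gamma>/2 - 1) * (2 * inner (x i s - x j s) (w i j s))" for i j s
  define G where "G i j s = dph i j s *\<^sub>R w i j s + (2 * ph i j s) *\<^sub>R (a i s - a j s)" for i j s
  define F2 where "F2 s = -(lv/N) * (\<Sum>i<N. \<Sum>j<N. inner (G i j s) (w i j s))" for s
  define F3 where "F3 = -(lv/N) * (\<Sum>i<N. \<Sum>j<N. inner (G i j t) (a i t - a j t))"
  have dw: "((\<lambda>s. w i j s) has_vector_derivative a i s - a j s) (at s)" if "i < N" "j < N" "s \<in> I" for i j s
    unfolding w_def using that by (intro has_vector_derivative_diff vd')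
  have dxx: "((\<lambda>s. x i s - x j s) has_vector_derivative w i j s) (at s)" if "i < N" "j < N" "s \<in> I" for i j s
    unfolding w_def using that by (intro has_vector_derivative_diff xd)
  have dph: "((\<lambda>s. ph i j s) has_real_derivative dph i j s) (at s)" if "i < N" "j < N" "s \<in> I" for i j s
    using rho_pow_deriv[OF dxx[OF that], of "-\<gamma>/2"] unfolding ph_def herd_phi_def dph_def .
  have dF1: "(F1 has_real_derivative F2 s) (at s)" if sI: "s \<in> I" for s
  proof -
    have "((\<lambda>s. ph i j s * inner (w i j s) (w i j s)) has_real_derivative inner (G i j s) (w i j s)) (at s)"
      if "i < N" "j < N" for i j
      apply (rule DERIV_cong[OF DERIV_mult[OF dph[OF that sI] dinner[OF dw[OF that sI] dw[OF that sI]]]])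
      by (simp add: G_def inner_add_left inner_commute algebra_simps)
    then have "((\<lambda>s. -(lv/N) * (\<Sum>i<N. \<Sum>j<N. ph i j s * inner (w i j s) (w i j s))) has_real_derivative F2 s) (at s)"
      unfolding F2_def by (intro DERIV_cmult DERIV_sum) auto
    then show ?thesis unfolding F1_def[abs_def] .
  qed
  have tI: "t \<in> I" by fact
  have w0: "w i j t = 0" if "i < N" "j < N" for i j
  proof -
    have "norm (v i t - v j t) \<le> (\<Sum>j<N. norm (v i t - v j t))"
      by (rule member_le_sum) (use that in auto)
    also have "\<dots> \<le> (\<Sum>i<N. \<Sum>j<N. norm (v i t - v j t))"
      by (rule member_le_sum[where f="\<lambda>i. \<Sum>j<N. norm (v i t - v j t)"]) (use that in \<open>auto intro: sum_nonneg\<close>)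
    finally have "norm (v i t - v j t) \<le> 0" using assms(11) by simp
    then show ?thesis unfolding w_def by simp
  qed
  have cx: "isCont (x i) t" if "i < N" for i
    using has_vector_derivative_continuous[OF xd[OF that tI]] .
  have cv: "isCont (v i) t" if "i < N" for i
    using has_vector_derivative_continuous[OF vd'[OF that tI]] .
  have cph: "isCont (ph i j) t" if "i < N" "j < N" for i j
    unfolding ph_def[abs_def] herd_phi_def using that cx
    by (intro continuous_intros) (auto simp: add_pos_nonneg)
  have ca: "isCont (a i) t" if "i < N" for i
    unfolding a_def[abs_def] using that cx cv cph
    by (intro continuous_intros) auto
  have cG: "isCont (G i j) t" if "i < N" "j < N" for i j
    unfolding G_def[abs_def] dph_def[abs_def] w_def using that cx cv cph ca
    by (intro continuous_intros) (auto simp: add_pos_nonneg)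
  have dF2: "(F2 has_real_derivative F3) (at t)"
  proof -
    have "((\<lambda>s. inner (G i j s) (w i j s)) has_real_derivative inner (G i j t) (a i t - a j t)) (at t)"
      if "i < N" "j < N" for i j
      by (rule Lzero[OF w0[OF that] dw[OF that tI] cG[OF that]])
    then show ?thesis unfolding F2_def[abs_def] F3_def by (intro DERIV_cmult DERIV_sum) auto
  qed
  have E1: "deriv E s = F1 s" if "s \<in> I" for s
    using DERIV_imp_deriv[OF dE[OF that]] .
  have dE1: "(deriv E has_real_derivative F2 s) (at s)" if "s \<in> I" for s
    by (rule has_field_derivative_transform_within_open[OF dF1[OF that] assms(6) that]) (simp add: E1)
  have E2: "deriv (deriv E) s = F2 s" if "s \<in> I" for s
    using DERIV_imp_deriv[OF dE1[OF that]] .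
  have dE2: "(deriv (deriv E) has_real_derivative F3) (at t)"
    by (rule has_field_derivative_transform_within_open[OF dF2 assms(6) tI]) (simp add: E2)
  have E3: "deriv (deriv (deriv E)) t = F3"
    using DERIV_imp_deriv[OF dE2] .
  have F1t: "F1 t = 0" unfolding F1_def using w0 by simp
  have F2t: "F2 t = 0" unfolding F2_def using w0 by simp
  have F3neg: "F3 < 0"
  proof -
    have phpos: "ph i j s > 0" for i j s
      unfolding ph_def herd_phi_def by (simp add: add_pos_nonneg)
    have tm: "inner (G i j t) (a i t - a j t) = 2 * ph i j t * inner (a i t - a j t) (a i t - a j t)"
      if "i < N" "j < N" for i j
      unfolding G_def w0[OF that] by (simp only: scaleR_zero_right add_0_left inner_scaleR_left)
    have tnn: "inner (G i j t) (a i t - a j t) \<ge> 0" if "i < N" "j < N" for i j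
      unfolding tm[OF that] using phpos[of i j t] by (intro mult_nonneg_nonneg inner_ge_zero) auto
    obtain p q where pq: "p < N" "q < N" "x p t \<noteq> x q t"
    proof -
      have "\<exists>p<N. \<exists>q<N. x p t \<noteq> x q t"
      proof (rule ccontr)
        assume "\<not> ?thesis"
        then have xe0: "x i t = x j t" if "i < N" "j < N" for i j using that by blast
        have xe: "x i t - x j t = 0" if "i < N" "j < N" for i j using xe0[OF that] by simp
        have "(\<Sum>i<N. \<Sum>j<N. norm (x i t - x j t)) = 0"
          by (intro sum.neutral ballI) (simp add: xe)
        with assms(12) show False by simp
      qed
      then show ?thesis using that by blast
    qed
    define e where "e = x p t - x q t"
    define f where "f k = inner (x k t) e" for k
    have fpq: "f p > f q"
    proof -
      have "f p - f q = inner e e" unfolding f_def e_def by (simp add: inner_diff_left)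
      moreover have "inner e e > 0" using pq(3) unfolding e_def by simp
      ultimately show ?thesis by linarith
    qed
    have fin: "finite (f ` {..<N})" "f ` {..<N} \<noteq> {}" using pq(1) by auto
    obtain im where im: "im < N" "f im = Max (f ` {..<N})"
      using Max_in[OF fin] by auto
    obtain jm where jm: "jm < N" "f jm = Min (f ` {..<N})"
      using Min_in[OF fin] by auto
    have imax: "f k \<le> f im" if "k < N" for k
      unfolding im(2) using fin that by (intro Max_ge) auto
    have jmin: "f jm \<le> f k" if "k < N" for k
      unfolding jm(2) using fin that by (intro Min_le) auto
    have fij: "f im > f jm" using imax[OF pq(1)] jmin[OF pq(2)] fpq by simp
    have ae: "inner (a i t) e = (lx/N) * (\<Sum>k<N. ph i k t * (f k - f i)) - lw * f i" if "i < N" for i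
    proof -
      have vz: "(\<Sum>k<N. ph i k t *\<^sub>R (v k t - v i t)) = 0"
      proof (rule sum.neutral, intro ballI)
        fix k assume "k \<in> {..<N}"
        then have "w i k t = 0" using w0[OF that] by auto
        then show "ph i k t *\<^sub>R (v k t - v i t) = 0" unfolding w_def by simp
      qed
      show ?thesis unfolding a_def vz f_def
        by (simp add: inner_diff_left inner_add_left inner_sum_left)
    qed
    have "inner (a im t) e \<le> - lw * f im"
    proof -
      have "(\<Sum>k<N. ph im k t * (f k - f im)) \<le> 0"
        by (intro sum_nonpos mult_nonneg_nonpos) (use phpos imax in \<open>auto simp: less_imp_le\<close>)
      then have "(lx/N) * (\<Sum>k<N. ph im k t * (f k - f im)) \<le> 0"
        using assms(3) by (intro mult_nonneg_nonpos) auto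
      then show ?thesis unfolding ae[OF im(1)] by simp
    qed
    moreover have "inner (a jm t) e \<ge> - lw * f jm"
    proof -
      have "(\<Sum>k<N. ph jm k t * (f k - f jm)) \<ge> 0"
        by (intro sum_nonneg mult_nonneg_nonneg) (use phpos jmin in \<open>auto simp: less_imp_le\<close>)
      then have "(lx/N) * (\<Sum>k<N. ph jm k t * (f k - f jm)) \<ge> 0"
        using assms(3) by (intro mult_nonneg_nonneg) auto
      then show ?thesis unfolding ae[OF jm(1)] by simp
    qed
    moreover have "- lw * f im < - lw * f jm" using fij assms(5) by simp
    ultimately have aneq: "a im t \<noteq> a jm t" by auto
    have tpos: "inner (G im jm t) (a im t - a jm t) > 0"
      unfolding tm[OF im(1) jm(1)] using phpos[of im jm t] aneq by simp
    have "inner (G im jm t) (a im t - a jm t) \<le> (\<Sum>j<N. inner (G im j t) (a im t - a j t))"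
      by (rule member_le_sum) (use jm(1) im(1) tnn in auto)
    also have "\<dots> \<le> (\<Sum>i<N. \<Sum>j<N. inner (G i j t) (a i t - a j t))"
      by (rule member_le_sum[where f="\<lambda>i. \<Sum>j<N. inner (G i j t) (a i t - a j t)"])
        (use im(1) tnn in \<open>auto intro: sum_nonneg\<close>)
    finally have "(\<Sum>i<N. \<Sum>j<N. inner (G i j t) (a i t - a j t)) > 0" using tpos by simp
    moreover have "lv / N > 0" using assms(1,4) by simp
    ultimately have "(lv / N) * (\<Sum>i<N. \<Sum>j<N. inner (G i j t) (a i t - a j t)) > 0" by (simp only: mult_pos_pos)
    moreover have "F3 = - ((lv / N) * (\<Sum>i<N. \<Sum>j<N. inner (G i j t) (a i t - a j t)))"
      unfolding F3_def by (simp only: minus_mult_left)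
    ultimately show ?thesis by linarith
  qed
  have d2: "(deriv ^^ 2) E = deriv (deriv E)" by (simp add: numeral_2_eq_2)
  have d3: "(deriv ^^ 3) E = deriv (deriv (deriv E))" by (simp add: numeral_3_eq_3)
  show ?thesis unfolding E_def[symmetric] d2 d3
    using E1[OF tI] E2[OF tI] E3 F1t F2t F3neg by simp
qed

end
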